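(* Assume that all random variables $Z_i(j)$ are centered, i.e. $\mathbb{E}Z_i(j)=0$. Then for $p\geq2$, $l\in\mathbb{N}$ (with $l\geq1$) and $p\geq l$, \[ \mathbb{E}\left[Z-2M\frac{\log(2N)}{\sqrt n}\right]_+^l\leq\left(\frac{35l^2}{n}\right)^{\frac l2}M^l. \]
   Context: Let $n,N$ be positive integers and $\mathcal{Z}_1,\dots,\mathcal{Z}_n$ probability spaces; all random variables below live on the product space with the product measure. For $1\leq i\leq n$, $1\leq j\leq N$ let $Z_i(j):\mathcal{Z}_i\to\mathbb{R}$ be random variables (independent across $i$, not necessarily identically distributed), $\mathbb{P}_nZ(j):=\frac1n\sum_{i=1}^nZ_i(j)$, $Z:=\max_{1\leq j\leq N}|\mathbb{P}_nZ(j)|$. Let $\mathcal{E}_i:\mathcal{Z}_i\to\mathbb{R}$ satisfy $|Z_i(j)|\leq\mathcal{E}_i$ for all $i,j$, and assume there are $p\in[1,\infty)$ and $M>0$ with $\mathbb{E}\mathcal{E}_i^p\leq M^p$ for all $i$. Notation: $(x)_+^l:=(\max\{0,x\})^l$; $\log$ is the natural logarithm. *)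

theory Defs
  imports "HOL-Probability.Probability"
begin

definition maxZ :: "nat \<Rightarrow> nat \<Rightarrow> (nat \<Rightarrow> nat \<Rightarrow> 'a \<Rightarrow> real) \<Rightarrow> (nat \<Rightarrow> 'a) \<Rightarrow> real" where
  "maxZ n N Z \<omega> = Max ((\<lambda>j. \<bar>(1 / real n) * (\<Sum>i=1..n. Z i j (\<omega> i))\<bar>) ` {1..N})"

end

theory Submission
  imports Defs
begin

lemma exp_affine_bound:
  fixes H h :: real
  assumes H: "H > 0" and h: "\<bar>h\<bar> \<le> H"
  shows "exp h \<le> ((H - h) * exp (-H) + (H + h) * exp H) / (2*H)"
proof -
  define t where "t = (H + h) / (2*H)"
  have t0: "t \<ge> 0" "t \<le> 1" using H h by (auto simp: t_def field_simps)
  have "exp ((1 - t) *\<^sub>R (-H) + t *\<^sub>R H) \<le> (1 - t) * exp (-H) + t * exp H"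
    using convex_onD[OF convex_on_exp[of 1], of t "-H" H] t0 by simp
  moreover have "(1 - t) *\<^sub>R (-H) + t *\<^sub>R H = h" using H by (simp add: t_def field_simps)
  moreover have "(1 - t) * exp (-H) + t * exp H = ((H - h) * exp (-H) + (H + h) * exp H) / (2*H)"
    using H by (simp add: t_def field_simps)
  ultimately show ?thesis by simp
qed

lemma pos_taylor:
  fixes t u :: real and q :: nat
  assumes q: "q \<ge> 2"
  shows "(max 0 (t+u))^q \<le> (max 0 t)^q + q * (max 0 t)^(q-1) * u
           + (q*(q-1)/2) * (max 0 t + \<bar>u\<bar>)^(q-2) * u^2"
proof -
  have C1: "(q*(q-1)/2::real) \<ge> 1"
  proof -
    have "real q * (real q - 1) \<ge> 2 * 1" using q by (intro mult_mono) auto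
    thus ?thesis using q by (simp add: of_nat_diff)
  qed
  show ?thesis
  proof (cases "t \<ge> 0")
    case tpos: True
    show ?thesis
    proof (cases "t + u \<ge> 0")
      case True
      show ?thesis
      proof (cases "u = 0")
        case True then show ?thesis by simp
      next
        case False
        define dd :: "nat \<Rightarrow> real \<Rightarrow> real" where "dd = (\<lambda>m. if m = 0 then (\<lambda>x. x^q) else if m = 1 then (\<lambda>x. real q * x^(q-1))
                                   else (\<lambda>x. real (q*(q-1)) * x^(q-2)))"
        have D: "\<forall>m x. m < 2 \<and> min t (t+u) \<le> x \<and> x \<le> max t (t+u) \<longrightarrow> DERIV (dd m) x :> dd (Suc m) x"
        proof (intro allI impI)
          fix m :: nat and x :: real assume "m < 2 \<and> min t (t+u) \<le> x \<and> x \<le> max t (t+u)"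
          hence "m = 0 \<or> m = 1" by auto
          thus "DERIV (dd m) x :> dd (Suc m) x"
          proof
            assume "m = 0" thus ?thesis unfolding dd_def by (auto intro!: derivative_eq_intros)
          next
            assume m1: "m = 1"
            have d: "DERIV (\<lambda>x. real q * x^(q-1)) x :> real q * (real (q-1) * x^(q-1-1))"
              by (auto intro!: derivative_eq_intros)
            have e1: "dd m = (\<lambda>x. real q * x^(q-1))" using m1 by (simp add: dd_def)
            have e2: "dd (Suc m) x = real q * (real (q-1) * x^(q-1-1))"
              using m1 by (simp add: dd_def numeral_2_eq_2)
            show ?thesis unfolding e1 e2 by (rule d)
          qed
        qed
        from Taylor[of 2 dd "\<lambda>x. x^q" "min t (t+u)" "max t (t+u)" t "t+u", OF _ _ D] False
        obtain \<xi> where xi: "(if t + u < t then t + u < \<xi> \<and> \<xi> < t else t < \<xi> \<and> \<xi> < t + u)"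
          and eq: "(t+u)^q = (\<Sum>m<2. (dd m t / fact m) * (t+u - t)^m) + (dd 2 \<xi> / fact 2) * (t+u - t)^2"
          by (auto simp: dd_def)
        have eq2: "(t+u)^q = t^q + q * t^(q-1) * u + (q*(q-1)/2) * \<xi>^(q-2) * u^2"
          using eq by (simp add: dd_def lessThan_nat_numeral)
        have xi0: "0 \<le> \<xi>" "\<xi> \<le> t + \<bar>u\<bar>" using xi tpos True by (auto split: if_splits)
        have "\<xi>^(q-2) \<le> (t + \<bar>u\<bar>)^(q-2)" by (rule power_mono) (use xi0 in auto)
        hence "(q*(q-1)/2) * \<xi>^(q-2) * u^2 \<le> (q*(q-1)/2) * (t + \<bar>u\<bar>)^(q-2) * u^2"
          using C1 by (intro mult_right_mono mult_left_mono) auto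
        thus ?thesis using eq2 tpos True by simp
      qed
    next
      case False
      have "0 \<le> t^(q-2) * ((t + (q/2)*u)^2 + (real q*(real q-2)/4) * u^2)"
        using q tpos by (intro mult_nonneg_nonneg add_nonneg_nonneg) auto
      also have "\<dots> = t^(q-2) * t^2 + q * (t^(q-2)*t) * u + (q*(q-1)/2) * t^(q-2) * u^2"
        using q by (simp add: power2_eq_square field_simps of_nat_diff)
      also have "t^(q-2) * t^2 = t^q" using q by (metis le_add_diff_inverse2 power_add)
      also have "t^(q-2)*t = t^(q-1)" using q
        by (metis One_nat_def Suc_diff_Suc Suc_le_lessD numeral_2_eq_2 power_Suc2)
      finally have A: "0 \<le> t^q + q * t^(q-1) * u + (q*(q-1)/2) * t^(q-2) * u^2" .
      have "t^(q-2) \<le> (t + \<bar>u\<bar>)^(q-2)" by (rule power_mono) (use tpos in auto)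
      hence B: "(q*(q-1)/2) * t^(q-2) * u^2 \<le> (q*(q-1)/2) * (t + \<bar>u\<bar>)^(q-2) * u^2"
        using C1 by (intro mult_right_mono mult_left_mono) auto
      have "max 0 (t+u) ^ q = 0" using False q by simp
      moreover have "max 0 t = t" using tpos by simp
      ultimately show ?thesis using A B by linarith
    qed
  next
    case tneg: False
    show ?thesis
    proof (cases "t + u \<ge> 0")
      case True
      have "(t+u)^q \<le> \<bar>u\<bar>^q" by (rule power_mono) (use tneg True in auto)
      also have "\<bar>u\<bar>^q = \<bar>u\<bar>^(q-2) * u^2" using q
        by (metis le_add_diff_inverse2 power2_abs power_add)
      also have "\<dots> \<le> (q*(q-1)/2) * \<bar>u\<bar>^(q-2) * u^2"
        using C1 mult_right_mono[OF C1, of "\<bar>u\<bar>^(q-2) * u^2"] by (simp add: mult.assoc)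
      finally show ?thesis using tneg True q by (simp add: power_0_left)
    next
      case False
      have "0 \<le> (q*(q-1)/2) * (max 0 t + \<bar>u\<bar>)^(q-2) * u^2" using C1 by simp
      moreover have "(0::real)^(q-1) = 0" using q by simp
      ultimately show ?thesis using tneg q False by (simp add: power_0_left)
    qed
  qed
qed

lemma one_plus_inv_pow: "(1 + 1/real q)^q \<le> exp 1"
proof (cases "q = 0")
  case True thus ?thesis by simp
next
  case False
  have "(1 + 1/real q)^q \<le> (exp (1/real q))^q"
    by (rule power_mono) (use exp_ge_add_one_self[of "1/real q"] in auto)
  also have "\<dots> = exp 1" using False by (simp flip: exp_of_nat_mult)
  finally show ?thesis .
qed

lemma split_bound:
  fixes v a :: real and q :: nat
  assumes q: "q \<ge> 2" and v: "v \<ge> 0" and a: "a \<ge> 0"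
  shows "(v+a)^(q-2) * a^2 \<le> exp 1 * v^(q-2) * a^2 + (real q+1)^(q-2) * a^q"
proof (cases "a * q \<le> v")
  case True
  have "v + a \<le> v * (1 + 1/real q)" using True q by (simp add: field_simps)
  hence "(v+a)^(q-2) \<le> (v * (1 + 1/real q))^(q-2)" by (intro power_mono) (use v a in auto)
  also have "\<dots> = v^(q-2) * (1 + 1/real q)^(q-2)" by (simp add: power_mult_distrib)
  also have "(1 + 1/real q)^(q-2) \<le> (1 + 1/real q)^q"
    by (rule power_increasing) auto
  hence "v^(q-2) * (1 + 1/real q)^(q-2) \<le> v^(q-2) * exp 1"
    using one_plus_inv_pow[of q] v by (intro mult_left_mono) auto
  finally have "(v+a)^(q-2) \<le> exp 1 * v^(q-2)" by (simp add: mult.commute)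
  hence "(v+a)^(q-2) * a^2 \<le> exp 1 * v^(q-2) * a^2" by (rule mult_right_mono) auto
  moreover have "0 \<le> (real q+1)^(q-2) * a^q" using a by simp
  ultimately show ?thesis by linarith
next
  case False
  have "v + a \<le> (real q + 1) * a" using False by (simp add: algebra_simps)
  hence "(v+a)^(q-2) \<le> ((real q + 1) * a)^(q-2)" by (intro power_mono) (use v a in auto)
  hence "(v+a)^(q-2) * a^2 \<le> ((real q + 1) * a)^(q-2) * a^2" by (rule mult_right_mono) auto
  also have "\<dots> = (real q+1)^(q-2) * (a^(q-2) * a^2)" by (simp add: power_mult_distrib)
  also have "a^(q-2) * a^2 = a^q" using q by (metis le_add_diff_inverse2 power_add)
  finally have "(v+a)^(q-2) * a^2 \<le> (real q+1)^(q-2) * a^q" .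
  moreover have "0 \<le> exp 1 * v^(q-2) * a^2" using v by simp
  ultimately show ?thesis by linarith
qed

definition WW :: "nat \<Rightarrow> real \<Rightarrow> (nat \<Rightarrow> real) \<Rightarrow> real" where
  "WW N lam s = (\<Sum>j=1..N. exp (lam * s j) + exp (- (lam * s j)))"

definition LSE :: "nat \<Rightarrow> real \<Rightarrow> (nat \<Rightarrow> real) \<Rightarrow> real" where
  "LSE N lam s = ln (WW N lam s) / lam"

definition GR :: "nat \<Rightarrow> real \<Rightarrow> (nat \<Rightarrow> real) \<Rightarrow> (nat \<Rightarrow> real) \<Rightarrow> real" where
  "GR N lam s x = (\<Sum>j=1..N. (exp (lam * s j) - exp (- (lam * s j))) * x j) / WW N lam s"

lemma WW_pos: "N \<ge> 1 \<Longrightarrow> WW N lam s > 0"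
  unfolding WW_def by (intro sum_pos) (auto intro: add_pos_pos)

lemma LSE_ge:
  assumes N: "N \<ge> 1" and lam: "lam > 0" and j: "j \<in> {1..N}"
  shows "\<bar>s j\<bar> \<le> LSE N lam s"
proof -
  have "exp (lam * \<bar>s j\<bar>) \<le> exp (lam * s j) + exp (- (lam * s j))"
    by (cases "s j \<ge> 0") (auto simp: add_increasing add_increasing2)
  also have "\<dots> \<le> WW N lam s" unfolding WW_def
    by (rule member_le_sum[OF j]) auto
  finally have "lam * \<bar>s j\<bar> \<le> ln (WW N lam s)"
    using WW_pos[OF N] by (simp add: ln_ge_iff)
  thus ?thesis using lam unfolding LSE_def by (simp add: field_simps)
qed

lemma LSE_zero: "N \<ge> 1 \<Longrightarrow> LSE N lam (\<lambda>_. 0) = ln (2 * real N) / lam"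
  unfolding LSE_def WW_def by simp

lemma LSE_lip:
  assumes N: "N \<ge> 1" and lam: "lam > 0" and x: "\<And>j. j \<in> {1..N} \<Longrightarrow> \<bar>x j\<bar> \<le> a"
  shows "\<bar>LSE N lam (\<lambda>j. s j + x j) - LSE N lam s\<bar> \<le> a"
proof -
  have up: "WW N lam (\<lambda>j. s j + x j) \<le> exp (lam * a) * WW N lam s"
    unfolding WW_def sum_distrib_left
  proof (rule sum_mono)
    fix j assume j: "j \<in> {1..N}"
    have xx: "lam * x j \<le> lam*a" "-(lam * x j) \<le> lam*a" using x[OF j] lam
      by (auto intro: mult_left_mono simp: abs_le_iff) (metis mult_left_mono less_le minus_mult_right minus_le_iff)
    have "exp (lam * (s j + x j)) \<le> exp (lam * a) * exp (lam * s j)"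
      using xx by (simp add: exp_add[symmetric] algebra_simps)
    moreover have "exp (- (lam * (s j + x j))) \<le> exp (lam * a) * exp (- (lam * s j))"
      using xx by (simp add: exp_add[symmetric] algebra_simps)
    ultimately show "exp (lam * (s j + x j)) + exp (- (lam * (s j + x j)))
       \<le> exp (lam * a) * (exp (lam * s j) + exp (- (lam * s j)))" by (simp add: algebra_simps)
  qed
  have lo: "exp (- (lam * a)) * WW N lam s \<le> WW N lam (\<lambda>j. s j + x j)"
    unfolding WW_def sum_distrib_left
  proof (rule sum_mono)
    fix j assume j: "j \<in> {1..N}"
    have xx: "lam * x j \<le> lam*a" "-(lam * x j) \<le> lam*a" using x[OF j] lam
      by (auto intro: mult_left_mono simp: abs_le_iff) (metis mult_left_mono less_le minus_mult_right minus_le_iff)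
    have "exp (- (lam * a)) * exp (lam * s j) \<le> exp (lam * (s j + x j))"
      using xx by (simp add: exp_add[symmetric] algebra_simps)
    moreover have "exp (- (lam * a)) * exp (- (lam * s j)) \<le> exp (- (lam * (s j + x j)))"
      using xx by (simp add: exp_add[symmetric] algebra_simps)
    ultimately show "exp (- (lam * a)) * (exp (lam * s j) + exp (- (lam * s j)))
       \<le> exp (lam * (s j + x j)) + exp (- (lam * (s j + x j)))" by (simp add: algebra_simps)
  qed
  have P1: "WW N lam s > 0" and P2: "WW N lam (\<lambda>j. s j + x j) > 0" using WW_pos[OF N] by auto
  have "ln (WW N lam (\<lambda>j. s j + x j)) \<le> ln (exp (lam * a) * WW N lam s)"
    using up P1 P2 by simp
  also have "\<dots> = lam * a + ln (WW N lam s)" using P1 by (simp add: ln_mult)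
  finally have A: "ln (WW N lam (\<lambda>j. s j + x j)) \<le> lam * a + ln (WW N lam s)" .
  have "ln (exp (- (lam * a)) * WW N lam s) \<le> ln (WW N lam (\<lambda>j. s j + x j))"
    using lo P1 P2 by simp
  moreover have "ln (exp (- (lam * a)) * WW N lam s) = - (lam * a) + ln (WW N lam s)"
    using P1 by (simp add: ln_mult)
  ultimately have B: "- (lam * a) + ln (WW N lam s) \<le> ln (WW N lam (\<lambda>j. s j + x j))" by simp
  show ?thesis using A B lam unfolding LSE_def
    by (simp add: abs_le_iff field_simps diff_divide_distrib[symmetric])
qed

lemma GR_bound:
  assumes N: "N \<ge> 1" and x: "\<And>j. j \<in> {1..N} \<Longrightarrow> \<bar>x j\<bar> \<le> a"
  shows "\<bar>GR N lam s x\<bar> \<le> a"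
proof -
  have "\<bar>\<Sum>j=1..N. (exp (lam * s j) - exp (- (lam * s j))) * x j\<bar>
        \<le> (\<Sum>j=1..N. \<bar>(exp (lam * s j) - exp (- (lam * s j))) * x j\<bar>)" by (rule sum_abs)
  also have "\<dots> \<le> (\<Sum>j=1..N. a * (exp (lam * s j) + exp (- (lam * s j))))"
  proof (rule sum_mono)
    fix j assume j: "j \<in> {1..N}"
    have "\<bar>exp (lam * s j) - exp (- (lam * s j))\<bar> \<le> exp (lam * s j) + exp (- (lam * s j))"
      using exp_gt_zero[of "lam * s j"] exp_gt_zero[of "-(lam * s j)"] by (intro abs_leI) linarith+
    hence "\<bar>exp (lam * s j) - exp (- (lam * s j))\<bar> * \<bar>x j\<bar> \<le> (exp (lam * s j) + exp (- (lam * s j))) * a"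
      using x[OF j] by (intro mult_mono) auto
    thus "\<bar>(exp (lam * s j) - exp (- (lam * s j))) * x j\<bar> \<le> a * (exp (lam * s j) + exp (- (lam * s j)))"
      by (simp add: abs_mult mult.commute)
  qed
  also have "\<dots> = a * WW N lam s" by (simp add: WW_def sum_distrib_left)
  finally show ?thesis using WW_pos[OF N, of lam s] unfolding GR_def
    by (simp add: abs_divide divide_le_eq)
qed

lemma LSE_smooth:
  assumes N: "N \<ge> 1" and lam: "lam > 0" and a: "a \<ge> 0"
    and x: "\<And>j. j \<in> {1..N} \<Longrightarrow> \<bar>x j\<bar> \<le> a"
  shows "LSE N lam (\<lambda>j. s j + x j) \<le> LSE N lam s + GR N lam s x + lam * a^2 / 2"
proof (cases "a = 0")
  case True
  hence x0: "\<And>j. j \<in> {1..N} \<Longrightarrow> x j = 0" using x by force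
  have "WW N lam (\<lambda>j. s j + x j) = WW N lam s" unfolding WW_def by (rule sum.cong) (auto simp: x0)
  moreover have "GR N lam s x = 0" unfolding GR_def by (simp add: x0)
  ultimately show ?thesis unfolding LSE_def using True by simp
next
  case False
  hence apos: "a > 0" using a by simp
  define H where "H = lam * a"
  have H: "H > 0" using apos lam by (simp add: H_def)
  define W where "W = WW N lam s"
  have W: "W > 0" using WW_pos[OF N] by (simp add: W_def)
  define \<mu> where "\<mu> = lam * GR N lam s x"
  have mu: "\<bar>\<mu>\<bar> \<le> H" using GR_bound[OF N x, where lam=lam and s=s] lam
    by (simp add: \<mu>_def H_def abs_mult mult_left_mono)
  define E1 where "E1 = exp (-H)"
  define E2 where "E2 = exp H"
  have step: "WW N lam (\<lambda>j. s j + x j) \<le>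
      (W * H * (E1 + E2) + (E2 - E1) * (\<Sum>j=1..N. (exp (lam * s j) - exp (- (lam * s j))) * (lam * x j))) / (2*H)"
  proof -
    have "WW N lam (\<lambda>j. s j + x j) \<le> (\<Sum>j=1..N.
        ((exp (lam * s j) + exp (- (lam * s j))) * H * (E1 + E2)
         + (E2 - E1) * ((exp (lam * s j) - exp (- (lam * s j))) * (lam * x j))) / (2*H))"
      unfolding WW_def
    proof (rule sum_mono)
      fix j assume j: "j \<in> {1..N}"
      define h where "h = lam * x j"
      have h: "\<bar>h\<bar> \<le> H" using x[OF j] lam by (simp add: h_def H_def abs_mult mult_left_mono)
      have h': "\<bar>-h\<bar> \<le> H" using h by simp
      have e1: "exp h \<le> ((H - h) * E1 + (H + h) * E2) / (2*H)"
        using exp_affine_bound[OF H h] by (simp add: E1_def E2_def)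
      have e2: "exp (-h) \<le> ((H + h) * E1 + (H - h) * E2) / (2*H)"
        using exp_affine_bound[OF H h'] by (simp add: E1_def E2_def)
      define A where "A = exp (lam * s j)"
      define B where "B = exp (- (lam * s j))"
      have "exp (lam * (s j + x j)) = A * exp h" by (simp add: A_def h_def algebra_simps flip: exp_add)
      moreover have "exp (- (lam * (s j + x j))) = B * exp (-h)" by (simp add: B_def h_def algebra_simps flip: exp_add)
      ultimately have "exp (lam * (s j + x j)) + exp (- (lam * (s j + x j)))
          \<le> A * (((H - h) * E1 + (H + h) * E2) / (2*H)) + B * (((H + h) * E1 + (H - h) * E2) / (2*H))"
        using mult_left_mono[OF e1, of A] mult_left_mono[OF e2, of B] by (simp add: A_def B_def)
      also have "\<dots> = ((A + B) * H * (E1 + E2) + (E2 - E1) * ((A - B) * h)) / (2*H)"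
        using H by (simp add: field_simps)
      finally show "exp (lam * (s j + x j)) + exp (- (lam * (s j + x j))) \<le>
        ((exp (lam * s j) + exp (- (lam * s j))) * H * (E1 + E2)
         + (E2 - E1) * ((exp (lam * s j) - exp (- (lam * s j))) * (lam * x j))) / (2*H)"
        by (simp add: A_def B_def h_def)
    qed
    also have "\<dots> = (W * H * (E1 + E2) + (E2 - E1) * (\<Sum>j=1..N. (exp (lam * s j) - exp (- (lam * s j))) * (lam * x j))) / (2*H)"
      by (simp add: W_def WW_def sum_divide_distrib[symmetric] sum.distrib sum_distrib_left sum_distrib_right[symmetric])
    finally show ?thesis .
  qed
  have sumeq: "(\<Sum>j=1..N. (exp (lam * s j) - exp (- (lam * s j))) * (lam * x j)) = \<mu> * W"
  proof -
    have "\<mu> * W = lam * (\<Sum>j=1..N. (exp (lam * s j) - exp (- (lam * s j))) * x j)"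
      using W by (simp add: \<mu>_def GR_def W_def)
    moreover have "(\<Sum>j=1..N. (exp (lam * s j) - exp (- (lam * s j))) * (lam * x j))
       = lam * (\<Sum>j=1..N. (exp (lam * s j) - exp (- (lam * s j))) * x j)"
      by (simp add: sum_distrib_left algebra_simps)
    ultimately show ?thesis by simp
  qed
  define p where "p = (H + \<mu>) / (2*H)"
  have p: "p \<ge> 0" using mu H by (simp add: p_def abs_le_iff)
  have "(W * H * (E1 + E2) + (E2 - E1) * (\<mu> * W)) / (2*H) = W * (E1 * (1 + p * (exp (2*H) - 1)))"
    using H by (simp add: p_def E1_def E2_def field_simps flip: exp_add)
  hence up: "WW N lam (\<lambda>j. s j + x j) \<le> W * (E1 * (1 + p * (exp (2*H) - 1)))"
    using step sumeq by simp
  have pos1: "1 + p * (exp (2*H) - 1) > 0" using p H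
    by (intro add_pos_nonneg mult_nonneg_nonneg) auto
  have P2: "WW N lam (\<lambda>j. s j + x j) > 0" using WW_pos[OF N] by simp
  have "ln (WW N lam (\<lambda>j. s j + x j)) \<le> ln (W * (E1 * (1 + p * (exp (2*H) - 1))))"
    using up P2 by simp
  also have "\<dots> = ln W - H + ln (1 + p * (exp (2*H) - 1))"
    using W pos1 by (simp add: ln_mult E1_def)
  finally have L1: "ln (WW N lam (\<lambda>j. s j + x j)) \<le> ln W - H + ln (1 + p * (exp (2*H) - 1))" .
  have "ln (1 + p * (exp (2*H) - 1)) \<le> 2*H*p + (2*H)^2/8"
    using Hoeffdings_lemma_aux[of "2*H" p] H p by simp
  hence L: "ln (WW N lam (\<lambda>j. s j + x j)) \<le> ln W - H + (2*H*p + (2*H)^2/8)" using L1 by linarith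
  have "2*H*p = H + \<mu>" using H by (simp add: p_def field_simps)
  moreover have "(2*H)^2/8 = H^2/2" by (simp add: power2_eq_square)
  ultimately have "ln (WW N lam (\<lambda>j. s j + x j)) \<le> ln W + \<mu> + H^2/2" using L by linarith
  hence "ln (WW N lam (\<lambda>j. s j + x j)) / lam \<le> (ln W + \<mu> + H^2/2) / lam"
    using lam by (simp add: divide_right_mono)
  also have "\<dots> = LSE N lam s + GR N lam s x + lam * a^2 / 2"
    using lam by (simp add: LSE_def W_def \<mu>_def H_def field_simps power2_eq_square)
  finally show ?thesis unfolding LSE_def .
qed

lemma young_pt:
  fixes x M r p :: real
  assumes x: "x \<ge> 0" and M: "M > 0" and r: "0 < r" "r \<le> p"
  shows "x powr r * M powr (p - r) \<le> (r/p) * x powr p + (1 - r/p) * M powr p"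
proof (cases "x = 0")
  case True 
  have "0 \<le> (1 - r/p) * M powr p" using r M by (simp add: divide_le_eq)
  thus ?thesis using True by simp
next
  case False
  hence xp: "x > 0" using x by simp
  have p: "p > 0" using r by simp
  have "(x powr p) powr (r/p) * (M powr p) powr (1 - r/p) \<le> (r/p) * x powr p + (1 - r/p) * M powr p"
  proof (rule Youngs_inequality_0)
    show "0 \<le> r/p" using r p by simp
    show "0 \<le> 1 - r/p" using r p by simp
  qed (use xp M in auto)
  moreover have "(x powr p) powr (r/p) = x powr r" using p by (simp add: powr_powr)
  moreover have "(M powr p) powr (1 - r/p) = M powr (p - r)" using p by (simp add: powr_powr algebra_simps)
  ultimately show ?thesis by simp
qed

lemma mom_lemma:
  fixes P :: "'a measure" and f :: "'a \<Rightarrow> real"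
  assumes P: "prob_space P" and f[measurable]: "f \<in> borel_measurable P"
    and f0: "\<And>x. x \<in> space P \<Longrightarrow> f x \<ge> 0"
    and mom: "(\<integral>\<^sup>+x. ennreal (f x powr p) \<partial>P) \<le> ennreal (M powr p)"
    and M: "M > 0" and r: "0 < r" "r \<le> p"
  shows "integrable P (\<lambda>x. f x powr r)" "(\<integral>x. f x powr r \<partial>P) \<le> M powr r"
proof -
  interpret prob_space P by fact
  have p: "p > 0" using r by simp
  have ip: "integrable P (\<lambda>x. f x powr p)"
  proof (rule integrableI_nonneg)
    show "AE x in P. 0 \<le> f x powr p" by simp
    show "(\<integral>\<^sup>+x. ennreal (f x powr p) \<partial>P) < \<infinity>" using mom
      by (metis ennreal_less_top infinity_ennreal_def le_less_trans)
  qed simp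
  have Ip: "(\<integral>x. f x powr p \<partial>P) \<le> M powr p"
  proof -
    have "ennreal (\<integral>x. f x powr p \<partial>P) = (\<integral>\<^sup>+x. ennreal (f x powr p) \<partial>P)"
      by (rule nn_integral_eq_integral[symmetric]) (use ip in auto)
    thus ?thesis using mom by (simp add: ennreal_le_iff[symmetric])
  qed
  define c where "c = M powr (p - r)"
  have c: "c > 0" using M by (simp add: c_def)
  have pt: "\<And>x. x \<in> space P \<Longrightarrow> f x powr r \<le> ((r/p) * f x powr p + (1 - r/p) * M powr p) / c"
    using young_pt[OF f0 M r] c by (simp add: c_def field_simps)
  have ib: "integrable P (\<lambda>x. ((r/p) * f x powr p + (1 - r/p) * M powr p) / c)"
    using ip by auto
  show ir: "integrable P (\<lambda>x. f x powr r)"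
  proof (rule Bochner_Integration.integrable_bound[OF ib])
    show "AE x in P. norm (f x powr r) \<le> norm (((r/p) * f x powr p + (1 - r/p) * M powr p) / c)"
    proof (rule AE_I2)
      fix x assume x: "x \<in> space P"
      have "norm (f x powr r) = f x powr r" by simp
      also have "\<dots> \<le> ((r/p) * f x powr p + (1 - r/p) * M powr p) / c" by (rule pt[OF x])
      also have "\<dots> \<le> norm (((r/p) * f x powr p + (1 - r/p) * M powr p) / c)" unfolding real_norm_def by (rule abs_ge_self)
      finally show "norm (f x powr r) \<le> norm (((r/p) * f x powr p + (1 - r/p) * M powr p) / c)" .
    qed
  qed simp
  have "(\<integral>x. f x powr r \<partial>P) \<le> (\<integral>x. ((r/p) * f x powr p + (1 - r/p) * M powr p) / c \<partial>P)"
    by (intro integral_mono_AE ir ib AE_I2 pt)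
  also have "\<dots> = ((r/p) * (\<integral>x. f x powr p \<partial>P) + (1 - r/p) * M powr p) / c"
    using ip by (simp add: prob_space)
  also have "\<dots> \<le> ((r/p) * M powr p + (1 - r/p) * M powr p) / c"
    using Ip r p c by (intro divide_right_mono add_right_mono mult_left_mono) auto
  also have "\<dots> = M powr r" using c M by (simp add: c_def field_simps flip: powr_add)
  finally show "(\<integral>x. f x powr r \<partial>P) \<le> M powr r" .
qed

lemma mix_pow:
  fixes v K :: real
  assumes "v \<ge> 0" "K \<ge> 0" "j \<le> q"
  shows "K^j * v^(q-j) \<le> v^q + K^q"
proof (cases "v \<le> K")
  case True
  have "K^j * v^(q-j) \<le> K^j * K^(q-j)" using assms True by (intro mult_left_mono power_mono) auto
  also have "\<dots> = K^q" using assms by (simp flip: power_add)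
  moreover have "0 \<le> v^q" "0 \<le> K^q" using assms by simp_all
  ultimately show ?thesis by linarith
next
  case False
  have "K^j * v^(q-j) \<le> v^j * v^(q-j)" using assms False by (intro mult_right_mono power_mono) auto
  also have "\<dots> = v^q" using assms by (simp flip: power_add)
  moreover have "0 \<le> v^q" "0 \<le> K^q" using assms by simp_all
  ultimately show ?thesis by linarith
qed

lemma alg:
  fixes n q :: nat and M K v A2 Aq :: real
  assumes n: "n \<ge> 1" and M: "M > 0" and K: "K > 0" and q: "q \<ge> 2" and v: "v \<ge> 0"
    and A2: "0 \<le> A2" "A2 \<le> M^2 / real n^2" and Aq: "0 \<le> Aq" "Aq \<le> M^q / real n^q"
  shows "v^q + real q * v^(q-1) * (sqrt n / (2*M) * A2 / 2)
          + (real (q*(q-1))/2) * (exp 1 * v^(q-2) * A2 + (real q+1)^(q-2) * Aq) + K^q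
        \<le> (1 + (real q * (M / sqrt n) / (4*K) + (real (q*(q-1))/2) * (exp 1 * (M / sqrt n)^2 / K^2
              + (real q+1)^(q-2) * (M / sqrt n)^q / K^q)) / real n) * (v^q + K^q)"
proof -
  define U where "U = M / sqrt n"
  define c2 where "c2 = real (q*(q-1))/2"
  define S where "S = v^q + K^q"
  have c2: "c2 \<ge> 0" by (simp add: c2_def)
  have nr: "real n \<ge> 1" using n by simp
  have sq: "sqrt (real n) > 0" using nr by simp
  have sqsq: "sqrt (real n) * sqrt (real n) = real n" using nr by simp
  have U: "U > 0" using M sq by (simp add: U_def)
  have S: "S \<ge> 0" using v K by (simp add: S_def)
  have m1: "K * v^(q-1) \<le> S" using mix_pow[of v K 1 q] v K q by (simp add: S_def)
  have m2: "K^2 * v^(q-2) \<le> S" using mix_pow[of v K 2 q] v K q by (simp add: S_def)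
  have vq1: "v^(q-1) \<ge> 0" "v^(q-2) \<ge> 0" using v by simp_all
  have e1: "sqrt n / (2*M) * (M^2 / real n^2) / 2 = U / (4 * real n)"
    using M sq sqsq by (simp add: U_def field_simps power2_eq_square)
  have T1: "real q * v^(q-1) * (sqrt n / (2*M) * A2 / 2) \<le> (real q * U / (4*K)) / real n * S"
  proof -
    have "real q * v^(q-1) * (sqrt n / (2*M) * A2 / 2) \<le> real q * v^(q-1) * (sqrt n / (2*M) * (M^2 / real n^2) / 2)"
      using A2 M vq1 by (intro mult_left_mono divide_right_mono) auto
    also have "\<dots> = real q * v^(q-1) * (U / (4 * real n))" by (simp only: e1)
    also have "\<dots> = (real q * U / (4*K)) / real n * (K * v^(q-1))"
      using K nr by (simp add: field_simps)
    also have "\<dots> \<le> (real q * U / (4*K)) / real n * S"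
      using m1 U K nr by (intro mult_left_mono) auto
    finally show ?thesis .
  qed
  have T2: "c2 * (exp 1 * v^(q-2) * A2) \<le> c2 * (exp 1 * U^2 / K^2) / real n * S"
  proof -
    have "c2 * (exp 1 * v^(q-2) * A2) \<le> c2 * (exp 1 * v^(q-2) * (M^2 / real n^2))"
      using A2 vq1 c2 by (intro mult_left_mono) auto
    also have "\<dots> = c2 * (exp 1 * U^2 / K^2) / real n * (K^2 * v^(q-2))"
      using K nr sq sqsq by (simp add: U_def field_simps power2_eq_square)
    also have "\<dots> \<le> c2 * (exp 1 * U^2 / K^2) / real n * S"
      using m2 c2 K nr by (intro mult_left_mono) auto
    finally show ?thesis .
  qed
  have T3: "c2 * ((real q+1)^(q-2) * Aq) \<le> c2 * ((real q+1)^(q-2) * U^q / K^q) / real n * S"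
  proof -
    have sge: "sqrt (real n) \<ge> 1" using nr by simp
    have "real n * sqrt (real n)^q = sqrt (real n)^(q+2)"
      using sqsq by (simp add: power2_eq_square power_add)
    also have "\<dots> \<le> sqrt (real n)^(2*q)" using sge q by (intro power_increasing) auto
    also have "\<dots> = real n ^ q" using sqsq by (simp add: power_mult power2_eq_square)
    finally have nn: "real n * sqrt (real n)^q \<le> real n ^ q" .
    have "M^q / real n^q \<le> U^q / real n"
    proof -
      have "M^q / real n^q = M^q / (real n * sqrt (real n)^q) * ((real n * sqrt (real n)^q) / real n^q)"
        using nr sq by (simp add: field_simps)
      also have "\<dots> \<le> M^q / (real n * sqrt (real n)^q) * 1"
        using nn nr sq M by (intro mult_left_mono) (auto simp: divide_le_eq)
      also have "\<dots> = U^q / real n" by (simp add: U_def power_divide field_simps)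
      finally show ?thesis by simp
    qed
    hence "c2 * ((real q+1)^(q-2) * Aq) \<le> c2 * ((real q+1)^(q-2) * (U^q / real n))"
      using Aq c2 by (intro mult_left_mono) auto
    also have "\<dots> = c2 * ((real q+1)^(q-2) * U^q / K^q) / real n * K^q"
      using K nr by (simp add: field_simps)
    also have "\<dots> \<le> c2 * ((real q+1)^(q-2) * U^q / K^q) / real n * S"
      using c2 K nr v U by (intro mult_left_mono) (auto simp: S_def)
    finally show ?thesis .
  qed
  have "v^q + real q * v^(q-1) * (sqrt n / (2*M) * A2 / 2)
          + c2 * (exp 1 * v^(q-2) * A2 + (real q+1)^(q-2) * Aq) + K^q
        \<le> S + (real q * U / (4*K)) / real n * S + c2 * (exp 1 * U^2 / K^2) / real n * S
           + c2 * ((real q+1)^(q-2) * U^q / K^q) / real n * S"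
    using T1 T2 T3 by (simp add: S_def distrib_left)
  also have "\<dots> = (1 + (real q * U / (4*K) + c2 * (exp 1 * U^2 / K^2
              + (real q+1)^(q-2) * U^q / K^q)) / real n) * S"
    using nr by (simp add: field_simps)
  finally show ?thesis by (simp add: U_def c2_def S_def)
qed

definition psi :: "real \<Rightarrow> nat \<Rightarrow> real \<Rightarrow> real" where
  "psi K q d = (max 0 (d + K))^q"

definition alph :: "nat \<Rightarrow> real \<Rightarrow> real \<Rightarrow> nat \<Rightarrow> real" where
  "alph n M K q = real q * (M / sqrt n) / (4*K) + (real (q*(q-1))/2) * (exp 1 * (M / sqrt n)^2 / K^2
              + (real q+1)^(q-2) * (M / sqrt n)^q / K^q)"

lemma powr_nat_nonneg: "(x::real) \<ge> 0 \<Longrightarrow> k > 0 \<Longrightarrow> x powr real k = x ^ k"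
  by (cases "x = 0") (auto simp: powr_realpow)

lemma one_step:
  fixes P :: "'a measure" and X :: "nat \<Rightarrow> 'a \<Rightarrow> real" and e :: "'a \<Rightarrow> real"
    and s :: "nat \<Rightarrow> real" and n N q :: nat and M K p :: real
  assumes P: "prob_space P" and N: "N \<ge> 1" and n: "n \<ge> 1" and M: "M > 0" and K: "K > 0"
    and q: "q \<ge> 2" and p: "p \<ge> 2" and qp: "real q \<le> p"
    and Xm: "\<And>j. j \<in> {1..N} \<Longrightarrow> X j \<in> borel_measurable P"
    and em: "e \<in> borel_measurable P"
    and env: "\<And>j y. j \<in> {1..N} \<Longrightarrow> y \<in> space P \<Longrightarrow> \<bar>X j y\<bar> \<le> e y"
    and mom: "(\<integral>\<^sup>+y. ennreal (e y powr p) \<partial>P) \<le> ennreal (M powr p)"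
    and cen: "\<And>j. j \<in> {1..N} \<Longrightarrow> (\<integral>y. X j y \<partial>P) = 0"
  shows "(\<integral>\<^sup>+y. ennreal (psi K q (LSE N (sqrt n / (2*M)) (\<lambda>j. s j + X j y / real n)
              - LSE N (sqrt n / (2*M)) (\<lambda>_. 0)) + K^q) \<partial>P)
         \<le> ennreal ((1 + alph n M K q / real n) * (psi K q (LSE N (sqrt n / (2*M)) s
              - LSE N (sqrt n / (2*M)) (\<lambda>_. 0)) + K^q))"
proof -
  interpret prob_space P by fact
  define lam where "lam = sqrt n / (2*M)"
  define F0 where "F0 = LSE N lam (\<lambda>_. 0)"
  define d where "d = LSE N lam s - F0"
  define v where "v = max 0 (d + K)"
  define c2 where "c2 = real (q*(q-1))/2"
  have nr: "real n \<ge> 1" using n by simp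
  have lam: "lam > 0" using M nr by (simp add: lam_def)
  have v: "v \<ge> 0" by (simp add: v_def)
  have c2: "c2 \<ge> 0" by (simp add: c2_def)
  have e0: "\<And>y. y \<in> space P \<Longrightarrow> e y \<ge> 0"
    using env[of 1] N by (metis abs_ge_zero atLeastAtMost_iff le_refl order_trans)
  have mo: "\<And>r. 0 < r \<Longrightarrow> r \<le> p \<Longrightarrow> integrable P (\<lambda>y. e y powr r) \<and> (\<integral>y. e y powr r \<partial>P) \<le> M powr r"
    using mom_lemma[OF P em e0 mom M] by blast
  have i1: "integrable P e"
  proof -
    have "integrable P (\<lambda>y. e y powr 1)" using mo[of 1] p by simp
    moreover have eq: "\<And>y. y \<in> space P \<Longrightarrow> e y powr 1 = e y" using e0 by simp
    moreover have "integrable P (\<lambda>y. e y powr 1) = integrable P e"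
      by (rule Bochner_Integration.integrable_cong) (auto simp: e0)
    ultimately show ?thesis by simp
  qed
  have i2: "integrable P (\<lambda>y. e y ^ 2)" and I2: "(\<integral>y. e y ^ 2 \<partial>P) \<le> M^2"
  proof -
    have A0: "integrable P (\<lambda>y. e y powr real 2) \<and> (\<integral>y. e y powr real 2 \<partial>P) \<le> M powr real 2"
      by (rule mo) (use p q qp in simp_all)
    note A = conjunct1[OF A0] conjunct2[OF A0]
    have eq: "\<And>y. y \<in> space P \<Longrightarrow> e y powr real 2 = e y ^ 2" by (rule powr_nat_nonneg[OF e0]) simp_all
    have "integrable P (\<lambda>y. e y powr real 2) = integrable P (\<lambda>y. e y ^ 2)"
      by (intro Bochner_Integration.integrable_cong refl eq)
    thus "integrable P (\<lambda>y. e y ^ 2)" using A(1) by simp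
    have "(\<integral>y. e y ^ 2 \<partial>P) = (\<integral>y. e y powr real 2 \<partial>P)" by (rule Bochner_Integration.integral_cong[OF refl eq[symmetric]])
    also have "\<dots> \<le> M powr real 2" by (rule A(2))
    also have "\<dots> = M^2" using M by (simp add: powr_realpow)
    finally show "(\<integral>y. e y ^ 2 \<partial>P) \<le> M^2" .
  qed
  have iq: "integrable P (\<lambda>y. e y ^ q)" and Iq: "(\<integral>y. e y ^ q \<partial>P) \<le> M^q"
  proof -
    have A0: "integrable P (\<lambda>y. e y powr real q) \<and> (\<integral>y. e y powr real q \<partial>P) \<le> M powr real q"
      by (rule mo) (use p q qp in simp_all)
    note A = conjunct1[OF A0] conjunct2[OF A0]
    have eq: "\<And>y. y \<in> space P \<Longrightarrow> e y powr real q = e y ^ q" by (rule powr_nat_nonneg[OF e0]) (use q in simp_all)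
    have "integrable P (\<lambda>y. e y powr real q) = integrable P (\<lambda>y. e y ^ q)"
      by (intro Bochner_Integration.integrable_cong refl eq)
    thus "integrable P (\<lambda>y. e y ^ q)" using A(1) by simp
    have "(\<integral>y. e y ^ q \<partial>P) = (\<integral>y. e y powr real q \<partial>P)" by (rule Bochner_Integration.integral_cong[OF refl eq[symmetric]])
    also have "\<dots> \<le> M powr real q" by (rule A(2))
    also have "\<dots> = M^q" using M by (simp add: powr_realpow)
    finally show "(\<integral>y. e y ^ q \<partial>P) \<le> M^q" .
  qed
  have iX: "\<And>j. j \<in> {1..N} \<Longrightarrow> integrable P (X j)"
  proof -
    fix j assume j: "j \<in> {1..N}"
    show "integrable P (X j)"
    proof (rule Bochner_Integration.integrable_bound[OF i1])
      show "X j \<in> borel_measurable P" using Xm[OF j] .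
      show "AE y in P. norm (X j y) \<le> norm (e y)"
        using env[OF j] e0 by (auto intro!: AE_I2)
    qed
  qed
  define cc where "cc = (\<lambda>j. exp (lam * s j) - exp (- (lam * s j)))"
  define W where "W = WW N lam s"
  define g where "g = (\<lambda>y. GR N lam s (\<lambda>j. X j y / real n))"
  have g_eq: "g = (\<lambda>y. (\<Sum>j=1..N. cc j / (W * real n) * X j y))"
    by (auto simp: g_def GR_def cc_def W_def sum_divide_distrib intro!: ext sum.cong)
  have ig: "integrable P g" unfolding g_eq
  proof (rule Bochner_Integration.integrable_sum)
    fix j assume j: "j \<in> {1..N}"
    show "integrable P (\<lambda>y. cc j / (W * real n) * X j y)" using iX[OF j] by simp
  qed
  have Ig: "(\<integral>y. g y \<partial>P) = 0" unfolding g_eq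
  proof (subst Bochner_Integration.integral_sum)
    fix j assume j: "j \<in> {1..N}"
    show "integrable P (\<lambda>y. cc j / (W * real n) * X j y)" using iX[OF j] by simp
  next
    show "(\<Sum>j=1..N. \<integral>y. cc j / (W * real n) * X j y \<partial>P) = 0"
      using cen by (intro sum.neutral) simp
  qed
  define a where "a = (\<lambda>y. e y / real n)"
  define h where "h = (\<lambda>y. (v^q + K^q) + real q * v^(q-1) * g y
      + (real q * v^(q-1) * lam / 2 + c2 * exp 1 * v^(q-2)) * (e y ^ 2 / real n ^ 2)
      + c2 * (real q+1)^(q-2) * (e y ^ q / real n ^ q))"
  have ih: "integrable P h" unfolding h_def using ig i2 iq by auto
  have Ih: "(\<integral>y. h y \<partial>P) = (v^q + K^q) + real q * v^(q-1) * 0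
      + (real q * v^(q-1) * lam / 2 + c2 * exp 1 * v^(q-2)) * ((\<integral>y. e y ^ 2 \<partial>P) / real n ^ 2)
      + c2 * (real q+1)^(q-2) * ((\<integral>y. e y ^ q \<partial>P) / real n ^ q)"
    unfolding h_def using ig i2 iq Ig by (simp add: prob_space)
  have pt: "psi K q (LSE N lam (\<lambda>j. s j + X j y / real n) - F0) + K^q \<le> h y" if y: "y \<in> space P" for y
  proof -
    define u where "u = LSE N lam (\<lambda>j. s j + X j y / real n) - LSE N lam s"
    have ay: "a y \<ge> 0" using e0[OF y] by (simp add: a_def)
    have xb: "\<And>j. j \<in> {1..N} \<Longrightarrow> \<bar>X j y / real n\<bar> \<le> a y"
      using env[OF _ y] nr by (auto simp: a_def divide_right_mono)
    have u1: "\<bar>u\<bar> \<le> a y" unfolding u_def by (rule LSE_lip[OF N lam xb])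
    have u2: "u \<le> g y + lam * a y ^ 2 / 2" unfolding u_def g_def
      using LSE_smooth[where x="\<lambda>j. X j y / real n" and s=s, OF N lam ay xb] by simp
    have "psi K q (LSE N lam (\<lambda>j. s j + X j y / real n) - F0) = (max 0 ((d + K) + u))^q"
      by (simp add: psi_def u_def d_def algebra_simps)
    also have "\<dots> \<le> v^q + real q * v^(q-1) * u + c2 * (v + \<bar>u\<bar>)^(q-2) * u^2"
      using pos_taylor[OF q, of "d+K" u] by (simp add: v_def c2_def)
    also have "\<dots> \<le> v^q + real q * v^(q-1) * (g y + lam * a y ^ 2 / 2) + c2 * ((v + a y)^(q-2) * a y^2)"
    proof -
      have A: "real q * v^(q-1) * u \<le> real q * v^(q-1) * (g y + lam * a y ^ 2 / 2)"
        using u2 v by (intro mult_left_mono) auto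
      have B: "(v + \<bar>u\<bar>)^(q-2) * u^2 \<le> (v + a y)^(q-2) * a y^2"
      proof (intro mult_mono)
        show "(v + \<bar>u\<bar>)^(q-2) \<le> (v + a y)^(q-2)" using u1 v by (intro power_mono) auto
        show "u^2 \<le> a y^2" using u1 by (metis abs_ge_zero power2_abs power_mono)
      qed (use v ay in auto)
      have C: "c2 * ((v + \<bar>u\<bar>)^(q-2) * u^2) \<le> c2 * ((v + a y)^(q-2) * a y^2)"
        by (rule mult_left_mono[OF B c2])
      show ?thesis using A C by (simp only: mult.assoc)
    qed
    also have "\<dots> \<le> v^q + real q * v^(q-1) * (g y + lam * a y ^ 2 / 2)
        + c2 * (exp 1 * v^(q-2) * a y^2 + (real q+1)^(q-2) * a y^q)"
      using split_bound[OF q v ay] c2 by (intro add_left_mono mult_left_mono) auto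
    also have "\<dots> = h y - K^q"
      by (simp add: h_def a_def power_divide algebra_simps)
    finally show ?thesis by simp
  qed
  have h0: "\<And>y. y \<in> space P \<Longrightarrow> h y \<ge> 0"
  proof -
    fix y assume y: "y \<in> space P"
    have "0 \<le> psi K q (LSE N lam (\<lambda>j. s j + X j y / real n) - F0) + K^q"
      using K by (simp add: psi_def)
    thus "h y \<ge> 0" using pt[OF y] by linarith
  qed
  have "(\<integral>\<^sup>+y. ennreal (psi K q (LSE N lam (\<lambda>j. s j + X j y / real n) - F0) + K^q) \<partial>P)
        \<le> (\<integral>\<^sup>+y. ennreal (h y) \<partial>P)"
    by (intro nn_integral_mono) (use pt in \<open>auto intro: ennreal_leI\<close>)
  also have "\<dots> = ennreal (\<integral>y. h y \<partial>P)"
    by (rule nn_integral_eq_integral[OF ih]) (use h0 in \<open>auto intro: AE_I2\<close>)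
  also have "(\<integral>y. h y \<partial>P) \<le> (1 + alph n M K q / real n) * (v^q + K^q)"
  proof -
    have "(\<integral>y. h y \<partial>P) = v^q + real q * v^(q-1) * (lam * ((\<integral>y. e y ^ 2 \<partial>P) / real n ^ 2) / 2)
      + c2 * (exp 1 * v^(q-2) * ((\<integral>y. e y ^ 2 \<partial>P) / real n ^ 2)
          + (real q+1)^(q-2) * ((\<integral>y. e y ^ q \<partial>P) / real n ^ q)) + K^q"
      unfolding Ih by (simp add: algebra_simps)
    also have "\<dots> \<le> (1 + alph n M K q / real n) * (v^q + K^q)"
      unfolding lam_def c2_def alph_def
    proof (rule alg[OF n M K q v])
      show "0 \<le> (\<integral>y. e y ^ 2 \<partial>P) / real n ^ 2" by (simp add: integral_nonneg_AE)
      show "(\<integral>y. e y ^ 2 \<partial>P) / real n ^ 2 \<le> M^2 / real n^2" using I2 by (simp add: divide_right_mono)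
      show "0 \<le> (\<integral>y. e y ^ q \<partial>P) / real n ^ q" using e0 by (simp add: integral_nonneg)
      show "(\<integral>y. e y ^ q \<partial>P) / real n ^ q \<le> M^q / real n^q" using Iq by (simp add: divide_right_mono)
    qed
    finally show ?thesis .
  qed
  hence "ennreal (\<integral>y. h y \<partial>P) \<le> ennreal ((1 + alph n M K q / real n) * (v^q + K^q))"
    by (rule ennreal_leI)
  finally show ?thesis by (simp add: lam_def F0_def psi_def v_def d_def)
qed

lemma LSE_meas:
  assumes f: "\<And>j. j \<in> {1..N} \<Longrightarrow> (\<lambda>\<omega>. f \<omega> j) \<in> borel_measurable M"
  shows "(\<lambda>\<omega>. LSE N lam (f \<omega>)) \<in> borel_measurable M"
proof -
  have [measurable]: "(\<lambda>\<omega>. WW N lam (f \<omega>)) \<in> borel_measurable M" unfolding WW_def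
  proof (rule borel_measurable_sum)
    fix j assume "j \<in> {1..N}"
    hence [measurable]: "(\<lambda>\<omega>. f \<omega> j) \<in> borel_measurable M" by (rule f)
    show "(\<lambda>\<omega>. exp (lam * f \<omega> j) + exp (-(lam * f \<omega> j))) \<in> borel_measurable M" by measurable
  qed
  show ?thesis unfolding LSE_def by measurable
qed

lemma alph_nonneg: "M > 0 \<Longrightarrow> K > 0 \<Longrightarrow> alph n M K q \<ge> 0"
  unfolding alph_def by (intro add_nonneg_nonneg mult_nonneg_nonneg divide_nonneg_nonneg) auto

lemma psi_meas:
  assumes [measurable]: "f \<in> borel_measurable M"
  shows "(\<lambda>\<omega>. psi K q (f \<omega>)) \<in> borel_measurable M"
  unfolding psi_def by measurable

lemma induct_bound:
  fixes Sp :: "nat \<Rightarrow> 'a measure" and Z :: "nat \<Rightarrow> nat \<Rightarrow> 'a \<Rightarrow> real" and E :: "nat \<Rightarrow> 'a \<Rightarrow> real"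
    and n N q :: nat and M K p :: real
  assumes prob: "\<And>i. prob_space (Sp i)" and N: "N \<ge> 1" and n: "n \<ge> 1" and M: "M > 0" and K: "K > 0"
    and q: "q \<ge> 2" and p: "p \<ge> 2" and qp: "real q \<le> p"
    and Zmeas: "\<And>i j. i \<in> {1..n} \<Longrightarrow> j \<in> {1..N} \<Longrightarrow> Z i j \<in> borel_measurable (Sp i)"
    and Emeas: "\<And>i. i \<in> {1..n} \<Longrightarrow> E i \<in> borel_measurable (Sp i)"
    and env: "\<And>i j x. i \<in> {1..n} \<Longrightarrow> j \<in> {1..N} \<Longrightarrow> x \<in> space (Sp i) \<Longrightarrow> \<bar>Z i j x\<bar> \<le> E i x"
    and mom: "\<And>i. i \<in> {1..n} \<Longrightarrow> (\<integral>\<^sup>+ x. ennreal (E i x powr p) \<partial>Sp i) \<le> ennreal (M powr p)"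
    and centered: "\<And>i j. i \<in> {1..n} \<Longrightarrow> j \<in> {1..N} \<Longrightarrow> (\<integral>x. Z i j x \<partial>Sp i) = 0"
  shows "k \<le> n \<Longrightarrow> (\<integral>\<^sup>+\<omega>. ennreal (psi K q (LSE N (sqrt n / (2*M)) (\<lambda>j. \<Sum>i=1..k. Z i j (\<omega> i) / real n)
              - LSE N (sqrt n / (2*M)) (\<lambda>_. 0)) + K^q) \<partial>(\<Pi>\<^sub>M i\<in>{1..k}. Sp i))
         \<le> ennreal ((1 + alph n M K q / real n)^k * (2 * K^q))"
proof (induction k)
  case 0
  interpret product_prob_space Sp by (rule product_prob_spaceI) (rule prob)
  interpret P0: prob_space "\<Pi>\<^sub>M i\<in>{}. Sp i" by (rule prob_space_PiM) (auto intro: prob)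
  have "psi K q (LSE N (sqrt n / (2*M)) (\<lambda>_. 0) - LSE N (sqrt n / (2*M)) (\<lambda>_. 0)) + K^q = 2 * K^q"
    using K by (simp add: psi_def)
  thus ?case by (simp add: P0.emeasure_space_1)
next
  case (Suc k)
  interpret product_prob_space Sp by (rule product_prob_spaceI) (rule prob)
  define lam where "lam = sqrt n / (2*M)"
  define F0 where "F0 = LSE N lam (\<lambda>_. 0)"
  define c where "c = 1 + alph n M K q / real n"
  define \<Phi> where "\<Phi> = (\<lambda>k \<omega>. psi K q (LSE N lam (\<lambda>j. \<Sum>i=1..k. Z i j (\<omega> i) / real n) - F0) + K^q)"
  have kn: "k \<le> n" "Suc k \<le> n" using Suc.prems by auto
  have IH: "(\<integral>\<^sup>+\<omega>. ennreal (\<Phi> k \<omega>) \<partial>(\<Pi>\<^sub>M i\<in>{1..k}. Sp i)) \<le> ennreal (c^k * (2 * K^q))"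
    using Suc.IH[OF kn(1)] by (simp add: \<Phi>_def lam_def F0_def c_def)
  have c0: "c \<ge> 0"
    using alph_nonneg[OF M K, of n q] by (simp add: c_def)
  have measg: "(\<lambda>\<omega>. ennreal (\<Phi> m \<omega>)) \<in> borel_measurable (\<Pi>\<^sub>M i\<in>{1..m}. Sp i)" if mn: "m \<le> n" for m
  proof -
    have comp: "\<And>j i. i \<in> {1..m} \<Longrightarrow> j \<in> {1..N} \<Longrightarrow>
        (\<lambda>\<omega>. Z i j (\<omega> i)) \<in> borel_measurable (\<Pi>\<^sub>M i\<in>{1..m}. Sp i)"
    proof -
      fix i j assume i: "i \<in> {1..m}" and j: "j \<in> {1..N}"
      have "i \<in> {1..n}" using i mn by auto
      from measurable_comp[OF measurable_component_singleton[where M=Sp, OF i] Zmeas[OF this j]]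
      show "(\<lambda>\<omega>. Z i j (\<omega> i)) \<in> borel_measurable (\<Pi>\<^sub>M i\<in>{1..m}. Sp i)"
        by (simp add: comp_def)
    qed
    have S: "\<And>j. j \<in> {1..N} \<Longrightarrow> (\<lambda>\<omega>. \<Sum>i=1..m. Z i j (\<omega> i) / real n) \<in> borel_measurable (\<Pi>\<^sub>M i\<in>{1..m}. Sp i)"
      by (intro borel_measurable_sum borel_measurable_divide comp) auto
    show ?thesis unfolding \<Phi>_def
      by (intro measurable_compose[OF _ measurable_ennreal] borel_measurable_add borel_measurable_const
          psi_meas borel_measurable_diff LSE_meas S)
  qed
  have meas: "(\<lambda>\<omega>. ennreal (\<Phi> (Suc k) \<omega>)) \<in> borel_measurable (\<Pi>\<^sub>M i\<in>insert (Suc k) {1..k}. Sp i)"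
    using measg[OF kn(2)] by (simp add: atLeastAtMostSuc_conv)
  have "(\<integral>\<^sup>+\<omega>. ennreal (\<Phi> (Suc k) \<omega>) \<partial>(\<Pi>\<^sub>M i\<in>{1..Suc k}. Sp i))
      = (\<integral>\<^sup>+\<omega>. ennreal (\<Phi> (Suc k) \<omega>) \<partial>(\<Pi>\<^sub>M i\<in>insert (Suc k) {1..k}. Sp i))"
    by (simp add: atLeastAtMostSuc_conv)
  also have "\<dots> = (\<integral>\<^sup>+x. (\<integral>\<^sup>+y. ennreal (\<Phi> (Suc k) (x(Suc k := y))) \<partial>Sp (Suc k)) \<partial>(\<Pi>\<^sub>M i\<in>{1..k}. Sp i))"
    by (rule product_nn_integral_insert[OF _ _ meas]) auto
  also have "\<dots> \<le> (\<integral>\<^sup>+x. ennreal (c * \<Phi> k x) \<partial>(\<Pi>\<^sub>M i\<in>{1..k}. Sp i))"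
  proof (rule nn_integral_mono)
    fix x
    have sk: "Suc k \<in> {1..n}" using kn by auto
    have eq: "\<And>y. \<Phi> (Suc k) (x(Suc k := y)) = psi K q (LSE N lam (\<lambda>j. (\<lambda>j. \<Sum>i=1..k. Z i j (x i) / real n) j + Z (Suc k) j y / real n) - F0) + K^q"
    proof -
      fix y
      have "\<And>j. (\<Sum>i=1..Suc k. Z i j ((x(Suc k := y)) i) / real n) = (\<Sum>i=1..k. Z i j (x i) / real n) + Z (Suc k) j y / real n"
        by (simp add: add.commute)
      thus "\<Phi> (Suc k) (x(Suc k := y)) = psi K q (LSE N lam (\<lambda>j. (\<lambda>j. \<Sum>i=1..k. Z i j (x i) / real n) j + Z (Suc k) j y / real n) - F0) + K^q"
        by (simp add: \<Phi>_def)
    qed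
    show "(\<integral>\<^sup>+y. ennreal (\<Phi> (Suc k) (x(Suc k := y))) \<partial>Sp (Suc k)) \<le> ennreal (c * \<Phi> k x)"
      unfolding eq
      unfolding lam_def F0_def c_def \<Phi>_def
      by (rule one_step[where e="E (Suc k)", OF prob N n M K q p qp]) (use sk Zmeas Emeas env mom centered in auto)
  qed
  also have "\<dots> = ennreal c * (\<integral>\<^sup>+x. ennreal (\<Phi> k x) \<partial>(\<Pi>\<^sub>M i\<in>{1..k}. Sp i))"
  proof -
    have "\<And>x. ennreal (c * \<Phi> k x) = ennreal c * ennreal (\<Phi> k x)" using c0 by (simp add: ennreal_mult')
    thus ?thesis using nn_integral_cmult[OF measg[OF kn(1)], of "ennreal c"] by simp
  qed
  also have "\<dots> \<le> ennreal c * ennreal (c^k * (2 * K^q))"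
    by (rule mult_left_mono[OF IH]) simp
  also have "\<dots> = ennreal (c^(Suc k) * (2 * K^q))"
    using c0 by (simp add: ennreal_mult'[symmetric] mult.assoc)
  finally show ?case by (simp add: \<Phi>_def lam_def F0_def c_def)
qed

lemma main_bound:
  fixes Sp :: "nat \<Rightarrow> 'a measure" and Z :: "nat \<Rightarrow> nat \<Rightarrow> 'a \<Rightarrow> real" and E :: "nat \<Rightarrow> 'a \<Rightarrow> real"
    and n N q :: nat and M K p :: real
  assumes n: "n \<ge> 1" and N: "N \<ge> 1"
    and prob: "\<And>i. i \<in> {1..n} \<Longrightarrow> prob_space (Sp i)"
    and Zmeas: "\<And>i j. i \<in> {1..n} \<Longrightarrow> j \<in> {1..N} \<Longrightarrow> Z i j \<in> borel_measurable (Sp i)"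
    and Emeas: "\<And>i. i \<in> {1..n} \<Longrightarrow> E i \<in> borel_measurable (Sp i)"
    and env: "\<And>i j x. i \<in> {1..n} \<Longrightarrow> j \<in> {1..N} \<Longrightarrow> x \<in> space (Sp i) \<Longrightarrow> \<bar>Z i j x\<bar> \<le> E i x"
    and M: "M > 0"
    and mom: "\<And>i. i \<in> {1..n} \<Longrightarrow> (\<integral>\<^sup>+ x. ennreal (E i x powr p) \<partial>Sp i) \<le> ennreal (M powr p)"
    and centered: "\<And>i j. i \<in> {1..n} \<Longrightarrow> j \<in> {1..N} \<Longrightarrow> (\<integral>x. Z i j x \<partial>Sp i) = 0"
    and p: "p \<ge> 2" and K: "K > 0" and q: "q \<ge> 2" and qp: "real q \<le> p"
  shows "(\<integral>\<^sup>+\<omega>. ennreal (psi K q (LSE N (sqrt n / (2*M)) (\<lambda>j. \<Sum>i=1..n. Z i j (\<omega> i) / real n)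
              - LSE N (sqrt n / (2*M)) (\<lambda>_. 0)) + K^q) \<partial>(\<Pi>\<^sub>M i\<in>{1..n}. Sp i))
         \<le> ennreal (exp (alph n M K q) * (2 * K^q))"
    and "(\<lambda>\<omega>. ennreal (psi K q (LSE N (sqrt n / (2*M)) (\<lambda>j. \<Sum>i=1..n. Z i j (\<omega> i) / real n)
              - LSE N (sqrt n / (2*M)) (\<lambda>_. 0)) + K^q)) \<in> borel_measurable (\<Pi>\<^sub>M i\<in>{1..n}. Sp i)"
proof -
  define Sp' where "Sp' = (\<lambda>i. if i \<in> {1..n} then Sp i else return (count_space UNIV) undefined)"
  have prob': "\<And>i. prob_space (Sp' i)" by (auto simp: Sp'_def prob intro: prob_space_return)
  have PiM_eq: "(\<Pi>\<^sub>M i\<in>{1..n}. Sp i) = (\<Pi>\<^sub>M i\<in>{1..n}. Sp' i)" by (rule PiM_cong) (auto simp: Sp'_def)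
  have B: "(\<integral>\<^sup>+\<omega>. ennreal (psi K q (LSE N (sqrt n / (2*M)) (\<lambda>j. \<Sum>i=1..n. Z i j (\<omega> i) / real n)
              - LSE N (sqrt n / (2*M)) (\<lambda>_. 0)) + K^q) \<partial>(\<Pi>\<^sub>M i\<in>{1..n}. Sp' i))
         \<le> ennreal ((1 + alph n M K q / real n)^n * (2 * K^q))"
    by (rule induct_bound[where E=E, OF prob' N n M K q p qp]) (auto simp: Sp'_def Zmeas Emeas env mom centered)
  have a0: "alph n M K q \<ge> 0" by (rule alph_nonneg[OF M K])
  have "(1 + alph n M K q / real n)^n \<le> exp (alph n M K q / real n)^n"
    using a0 by (intro power_mono) (auto simp: exp_ge_add_one_self add_nonneg_nonneg)
  also have "\<dots> = exp (alph n M K q)" using n by (simp flip: exp_of_nat_mult)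
  finally have "(1 + alph n M K q / real n)^n * (2 * K^q) \<le> exp (alph n M K q) * (2 * K^q)"
    using K by (intro mult_right_mono) auto
  with B show "(\<integral>\<^sup>+\<omega>. ennreal (psi K q (LSE N (sqrt n / (2*M)) (\<lambda>j. \<Sum>i=1..n. Z i j (\<omega> i) / real n)
              - LSE N (sqrt n / (2*M)) (\<lambda>_. 0)) + K^q) \<partial>(\<Pi>\<^sub>M i\<in>{1..n}. Sp i))
         \<le> ennreal (exp (alph n M K q) * (2 * K^q))"
    unfolding PiM_eq by (meson ennreal_leI order_trans)
  have comp: "\<And>j i. i \<in> {1..n} \<Longrightarrow> j \<in> {1..N} \<Longrightarrow>
        (\<lambda>\<omega>. Z i j (\<omega> i)) \<in> borel_measurable (\<Pi>\<^sub>M i\<in>{1..n}. Sp i)"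
  proof -
    fix i j assume i: "i \<in> {1..n}" and j: "j \<in> {1..N}"
    from measurable_comp[OF measurable_component_singleton[where M=Sp, OF i] Zmeas[OF i j]]
    show "(\<lambda>\<omega>. Z i j (\<omega> i)) \<in> borel_measurable (\<Pi>\<^sub>M i\<in>{1..n}. Sp i)"
      by (simp add: comp_def)
  qed
  have S: "\<And>j. j \<in> {1..N} \<Longrightarrow> (\<lambda>\<omega>. \<Sum>i=1..n. Z i j (\<omega> i) / real n) \<in> borel_measurable (\<Pi>\<^sub>M i\<in>{1..n}. Sp i)"
    by (intro borel_measurable_sum borel_measurable_divide comp) auto
  show "(\<lambda>\<omega>. ennreal (psi K q (LSE N (sqrt n / (2*M)) (\<lambda>j. \<Sum>i=1..n. Z i j (\<omega> i) / real n)
              - LSE N (sqrt n / (2*M)) (\<lambda>_. 0)) + K^q)) \<in> borel_measurable (\<Pi>\<^sub>M i\<in>{1..n}. Sp i)"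
    by (intro measurable_compose[OF _ measurable_ennreal] borel_measurable_add borel_measurable_const
          psi_meas borel_measurable_diff LSE_meas S)
qed

lemma alph_l:
  fixes l n :: nat and M :: real
  assumes l: "l \<ge> 2" and n: "n \<ge> 1" and M: "M > 0"
  shows "alph n M (2 * real l * (M / sqrt n)) l \<le> 1"
proof -
  define U where "U = M / sqrt n"
  have U: "U > 0" using M n by (simp add: U_def)
  define c2 where "c2 = real (l*(l-1))/2"
  have lr: "real l \<ge> 2" using l by simp
  have c2a: "c2 \<le> real l ^ 2 / 2" using l by (simp add: c2_def power2_eq_square of_nat_diff algebra_simps)
  have c2b: "c2 \<le> (real l + 1)^2 / 2" using l by (simp add: c2_def power2_eq_square of_nat_diff algebra_simps)
  have c20: "c2 \<ge> 0" by (simp add: c2_def)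
  have t1: "real l * U / (4 * (2 * real l * U)) = 1/8" using U lr by (simp add: field_simps)
  have t2: "c2 * (exp 1 * U^2 / (2 * real l * U)^2) \<le> 3/8"
  proof -
    have "c2 * (exp 1 * U^2 / (2 * real l * U)^2) = c2 * exp 1 / (4 * real l ^ 2)"
      using U lr by (simp add: field_simps power2_eq_square)
    also have "\<dots> \<le> (real l ^ 2 / 2) * exp 1 / (4 * real l ^ 2)"
      using c2a lr by (intro divide_right_mono mult_right_mono) auto
    also have "\<dots> = exp 1 / 8" using lr by (simp add: field_simps)
    also have "\<dots> \<le> 3/8" using exp_le by simp
    finally show ?thesis .
  qed
  have t3: "c2 * ((real l+1)^(l-2) * U^l / (2 * real l * U)^l) \<le> 3/8"
  proof -
    have "c2 * (real l+1)^(l-2) \<le> (real l + 1)^2 / 2 * (real l+1)^(l-2)"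
      using c2b by (intro mult_right_mono) auto
    also have "\<dots> = (real l + 1)^l / 2"
    proof -
      have "(real l + 1)^2 * (real l+1)^(l-2) = (real l + 1)^l"
        using l by (metis le_add_diff_inverse power_add)
      thus ?thesis by simp
    qed
    finally have A: "c2 * (real l+1)^(l-2) \<le> (real l + 1)^l / 2" .
    have "c2 * ((real l+1)^(l-2) * U^l / (2 * real l * U)^l) = c2 * (real l+1)^(l-2) / (2 * real l)^l"
      using U lr by (simp add: power_mult_distrib field_simps)
    also have "\<dots> \<le> ((real l + 1)^l / 2) / (2 * real l)^l"
      using A lr by (intro divide_right_mono) auto
    also have "\<dots> = (1 + 1 / real l)^l / (2 * 2^l)"
      using lr by (simp add: power_mult_distrib power_divide field_simps)
    also have "\<dots> \<le> exp 1 / (2 * 4)"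
    proof (rule frac_le)
      show "(1 + 1 / real l)^l \<le> exp 1" by (rule one_plus_inv_pow)
      have "(2::real)^2 \<le> 2^l" using l by (intro power_increasing) auto
      thus "2 * 4 \<le> 2 * (2::real)^l" by simp
    qed auto
    also have "\<dots> \<le> 3/8" using exp_le by simp
    finally show ?thesis .
  qed
  have "alph n M (2 * real l * (M / sqrt n)) l
      = real l * U / (4 * (2 * real l * U)) + c2 * (exp 1 * U^2 / (2 * real l * U)^2)
        + c2 * ((real l+1)^(l-2) * U^l / (2 * real l * U)^l)"
    by (simp add: alph_def U_def c2_def distrib_left)
  also have "\<dots> \<le> 1/8 + 3/8 + 3/8" using t1 t2 t3 by linarith
  finally show ?thesis by simp
qed

lemma alph_1:
  fixes n :: nat and M :: real
  assumes n: "n \<ge> 1" and M: "M > 0"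
  shows "alph n M (6 * (M / sqrt n)) 2 \<le> 1/4"
proof -
  define U where "U = M / sqrt n"
  have U: "U > 0" using M n by (simp add: U_def)
  have "alph n M (6 * (M / sqrt n)) 2 = 1/12 + (exp 1 + 1) / 36"
    using U by (simp add: alph_def flip: U_def) (simp add: field_simps power2_eq_square)
  also have "\<dots> \<le> 1/4" using exp_le by (simp add: field_simps)
  finally show ?thesis .
qed

theorem theorem4p2:
  fixes Sp :: "nat \<Rightarrow> 'a measure"
    and Z :: "nat \<Rightarrow> nat \<Rightarrow> 'a \<Rightarrow> real"
    and E :: "nat \<Rightarrow> 'a \<Rightarrow> real"
    and n N l :: nat and p M :: real
  assumes n: "n \<ge> 1" and N: "N \<ge> 1"
    and prob: "\<And>i. i \<in> {1..n} \<Longrightarrow> prob_space (Sp i)"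
    and Zmeas: "\<And>i j. i \<in> {1..n} \<Longrightarrow> j \<in> {1..N} \<Longrightarrow> Z i j \<in> borel_measurable (Sp i)"
    and Emeas: "\<And>i. i \<in> {1..n} \<Longrightarrow> E i \<in> borel_measurable (Sp i)"
    and env: "\<And>i j x. i \<in> {1..n} \<Longrightarrow> j \<in> {1..N} \<Longrightarrow> x \<in> space (Sp i) \<Longrightarrow> \<bar>Z i j x\<bar> \<le> E i x"
    and M: "M > 0"
    and mom: "\<And>i. i \<in> {1..n} \<Longrightarrow> (\<integral>\<^sup>+ x. ennreal (E i x powr p) \<partial>Sp i) \<le> ennreal (M powr p)"
    and centered: "\<And>i j. i \<in> {1..n} \<Longrightarrow> j \<in> {1..N} \<Longrightarrow> (\<integral>x. Z i j x \<partial>Sp i) = 0"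
    and p: "p \<ge> 2" and l: "l \<ge> 1" and lp: "real l \<le> p"
  shows "(\<integral>\<^sup>+ \<omega>. ennreal ((max 0 (maxZ n N Z \<omega> - 2 * M * ln (2 * real N) / sqrt (real n))) ^ l)
            \<partial>(\<Pi>\<^sub>M i\<in>{1..n}. Sp i))
         \<le> ennreal ((35 * (real l)^2 / real n) powr (real l / 2) * M ^ l)"
proof -
  define U where "U = M / sqrt n"
  define lam where "lam = sqrt n / (2*M)"
  define F0 where "F0 = LSE N lam (\<lambda>_. 0)"
  define D where "D = (\<lambda>\<omega>. LSE N lam (\<lambda>j. \<Sum>i=1..n. Z i j (\<omega> i) / real n) - F0)"
  have nr: "real n \<ge> 1" using n by simp
  have sq: "sqrt (real n) > 0" using nr by simp
  have U: "U > 0" using M sq by (simp add: U_def)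
  have lam: "lam > 0" using M sq by (simp add: lam_def)
  have t: "2 * M * ln (2 * real N) / sqrt (real n) = F0"
    unfolding F0_def LSE_zero[OF N] lam_def using M sq by (simp add: field_simps)
  have key: "maxZ n N Z \<omega> - 2 * M * ln (2 * real N) / sqrt (real n) \<le> D \<omega>" for \<omega>
  proof -
    have "maxZ n N Z \<omega> \<le> LSE N lam (\<lambda>j. \<Sum>i=1..n. Z i j (\<omega> i) / real n)"
      unfolding maxZ_def
    proof (subst Max_le_iff)
      show "finite ((\<lambda>j. \<bar>1 / real n * (\<Sum>i = 1..n. Z i j (\<omega> i))\<bar>) ` {1..N})" by simp
      show "(\<lambda>j. \<bar>1 / real n * (\<Sum>i = 1..n. Z i j (\<omega> i))\<bar>) ` {1..N} \<noteq> {}" using N by simp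
      show "\<forall>a\<in>(\<lambda>j. \<bar>1 / real n * (\<Sum>i = 1..n. Z i j (\<omega> i))\<bar>) ` {1..N}.
              a \<le> LSE N lam (\<lambda>j. \<Sum>i = 1..n. Z i j (\<omega> i) / real n)"
      proof
        fix a assume "a \<in> (\<lambda>j. \<bar>1 / real n * (\<Sum>i = 1..n. Z i j (\<omega> i))\<bar>) ` {1..N}"
        then obtain j where j: "j \<in> {1..N}" and a: "a = \<bar>1 / real n * (\<Sum>i = 1..n. Z i j (\<omega> i))\<bar>" by auto
        have "a = \<bar>(\<lambda>j. \<Sum>i=1..n. Z i j (\<omega> i) / real n) j\<bar>" by (simp add: a sum_divide_distrib)
        also have "\<dots> \<le> LSE N lam (\<lambda>j. \<Sum>i=1..n. Z i j (\<omega> i) / real n)" by (rule LSE_ge[OF N lam j])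
        finally show "a \<le> LSE N lam (\<lambda>j. \<Sum>i = 1..n. Z i j (\<omega> i) / real n)" .
      qed
    qed
    thus ?thesis unfolding t D_def by simp
  qed
  have RHS: "(35 * (real l)^2 / real n) powr (real l / 2) * M ^ l = (sqrt 35 * real l * U)^l"
  proof -
    have pos: "35 * (real l)^2 / real n > 0" using l nr by simp
    have "(35 * (real l)^2 / real n) powr (real l / 2) = ((35 * (real l)^2 / real n) powr (1/2)) powr real l"
      by (simp add: powr_powr)
    also have "\<dots> = (sqrt (35 * (real l)^2 / real n)) ^ l"
      using pos by (simp add: powr_half_sqrt powr_realpow)
    also have "sqrt (35 * (real l)^2 / real n) = sqrt 35 * real l / sqrt n"
      by (simp add: real_sqrt_mult real_sqrt_divide)
    finally show ?thesis by (simp add: U_def power_mult_distrib power_divide)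
  qed
  show ?thesis
  proof (cases "l \<ge> 2")
    case True
    define K where "K = 2 * real l * U"
    have K: "K > 0" using U l by (simp add: K_def)
    have mb: "(\<integral>\<^sup>+\<omega>. ennreal (psi K l (D \<omega>) + K^l) \<partial>(\<Pi>\<^sub>M i\<in>{1..n}. Sp i))
         \<le> ennreal (exp (alph n M K l) * (2 * K^l))"
      unfolding D_def F0_def lam_def
      by (rule main_bound(1)[OF n N prob Zmeas Emeas env M mom centered p K True lp])
    have pt: "(max 0 (maxZ n N Z \<omega> - 2 * M * ln (2 * real N) / sqrt (real n))) ^ l \<le> psi K l (D \<omega>) + K^l" for \<omega>
    proof -
      have "(max 0 (maxZ n N Z \<omega> - 2 * M * ln (2 * real N) / sqrt (real n))) ^ l \<le> psi K l (D \<omega>)"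
        unfolding psi_def using key[of \<omega>] K by (intro power_mono) auto
      moreover have "0 \<le> K^l" using K by simp
      ultimately show ?thesis by linarith
    qed
    have "(\<integral>\<^sup>+ \<omega>. ennreal ((max 0 (maxZ n N Z \<omega> - 2 * M * ln (2 * real N) / sqrt (real n))) ^ l)
            \<partial>(\<Pi>\<^sub>M i\<in>{1..n}. Sp i)) \<le> (\<integral>\<^sup>+\<omega>. ennreal (psi K l (D \<omega>) + K^l) \<partial>(\<Pi>\<^sub>M i\<in>{1..n}. Sp i))"
      by (intro nn_integral_mono ennreal_leI pt)
    also note mb
    also have "exp (alph n M K l) * (2 * K^l) \<le> (sqrt 35 * real l * U)^l"
    proof -
      have "exp (alph n M K l) \<le> 3"
        using alph_l[OF True n M] exp_le by (simp add: K_def U_def) (meson exp_le exp_le_cancel_iff order_trans)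
      hence "exp (alph n M K l) * (2 * K^l) \<le> 3 * (2 * K^l)" using K by (intro mult_right_mono) auto
      also have "\<dots> = 6 * 2^l * (real l * U)^l" by (simp add: K_def power_mult_distrib)
      also have "\<dots> \<le> sqrt 35 ^ l * (real l * U)^l"
      proof (intro mult_right_mono)
        have s2: "sqrt 35 \<ge> (2::real)" by (rule real_le_rsqrt) simp
        have "(2::real)^l = 2^2 * 2^(l-2)" using True by (metis le_add_diff_inverse power_add)
        hence "6 * 2^l = 24 * (2::real)^(l-2)" by simp
        also have "\<dots> \<le> 35 * sqrt 35^(l-2)" using s2 by (intro mult_mono power_mono) auto
        also have "\<dots> = sqrt 35 ^ l"
        proof -
          have "sqrt 35 ^ l = sqrt 35^2 * sqrt (35::real)^(l-2)" using True by (metis le_add_diff_inverse power_add)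
          thus ?thesis by simp
        qed
        finally show "6 * 2^l \<le> sqrt 35 ^ l" .
      qed (use U in simp)
      also have "\<dots> = (sqrt 35 * real l * U)^l" by (simp add: power_mult_distrib)
      finally show ?thesis .
    qed
    hence "ennreal (exp (alph n M K l) * (2 * K^l)) \<le> ennreal ((sqrt 35 * real l * U)^l)" by (rule ennreal_leI)
    finally show ?thesis unfolding RHS .
  next
    case False
    hence l1: "l = 1" using l by simp
    define K where "K = 6 * U"
    have K: "K > 0" using U by (simp add: K_def)
    have two: "(2::nat) \<ge> 2" by simp
    have p2: "real (2::nat) \<le> p" using p by simp
    have mb: "(\<integral>\<^sup>+\<omega>. ennreal (psi K 2 (D \<omega>) + K^2) \<partial>(\<Pi>\<^sub>M i\<in>{1..n}. Sp i))
         \<le> ennreal (exp (alph n M K 2) * (2 * K^2))"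
      unfolding D_def F0_def lam_def
      by (rule main_bound(1)[OF n N prob Zmeas Emeas env M mom centered p K two p2])
    have meas: "(\<lambda>\<omega>. ennreal (psi K 2 (D \<omega>) + K^2)) \<in> borel_measurable (\<Pi>\<^sub>M i\<in>{1..n}. Sp i)"
      unfolding D_def F0_def lam_def
      by (rule main_bound(2)[OF n N prob Zmeas Emeas env M mom centered p K two p2])
    have pt: "(max 0 (maxZ n N Z \<omega> - 2 * M * ln (2 * real N) / sqrt (real n))) ^ l
              \<le> (psi K 2 (D \<omega>) + K^2) * (1 / (4*K))" for \<omega>
    proof -
      have A: "max 0 (maxZ n N Z \<omega> - 2 * M * ln (2 * real N) / sqrt (real n)) \<le> max 0 (D \<omega>)"
        using key[of \<omega>] by simp
      have B: "max 0 (D \<omega>) * (4*K) \<le> psi K 2 (D \<omega>) + K^2"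
      proof (cases "D \<omega> \<ge> 0")
        case True
        have "(D \<omega> + K)^2 - D \<omega> * (4*K) = (D \<omega> - K)^2" by (simp add: power2_eq_square algebra_simps)
        moreover have "(D \<omega> - K)^2 \<ge> 0" by simp
        ultimately have "D \<omega> * (4*K) \<le> (D \<omega> + K)^2" by linarith
        moreover have "K^2 \<ge> 0" by simp
        moreover have "psi K 2 (D \<omega>) = (D \<omega> + K)^2" using True K by (simp add: psi_def)
        moreover have "max 0 (D \<omega>) = D \<omega>" using True by simp
        ultimately show ?thesis by linarith
      next
        case False
        thus ?thesis using K by (simp add: psi_def)
      qed
      have C: "max 0 (D \<omega>) \<le> (psi K 2 (D \<omega>) + K^2) / (4*K)"
        by (subst pos_le_divide_eq) (use K B in auto)
      have "max 0 (D \<omega>) \<le> (psi K 2 (D \<omega>) + K^2) * (1 / (4*K))" using C by simp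
      hence "max 0 (maxZ n N Z \<omega> - 2 * M * ln (2 * real N) / sqrt (real n)) \<le> (psi K 2 (D \<omega>) + K^2) * (1 / (4*K))"
        using A by linarith
      thus ?thesis by (simp only: l1 power_one_right)
    qed
    have "(\<integral>\<^sup>+ \<omega>. ennreal ((max 0 (maxZ n N Z \<omega> - 2 * M * ln (2 * real N) / sqrt (real n))) ^ l)
            \<partial>(\<Pi>\<^sub>M i\<in>{1..n}. Sp i)) \<le> (\<integral>\<^sup>+\<omega>. ennreal (psi K 2 (D \<omega>) + K^2) * ennreal (1 / (4*K)) \<partial>(\<Pi>\<^sub>M i\<in>{1..n}. Sp i))"
    proof (intro nn_integral_mono)
      fix \<omega>
      have "ennreal ((max 0 (maxZ n N Z \<omega> - 2 * M * ln (2 * real N) / sqrt (real n))) ^ l)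
          \<le> ennreal ((psi K 2 (D \<omega>) + K^2) * (1 / (4*K)))" by (intro ennreal_leI pt)
      also have "\<dots> = ennreal (psi K 2 (D \<omega>) + K^2) * ennreal (1 / (4*K))"
        using K by (intro ennreal_mult) (auto simp: psi_def)
      finally show "ennreal ((max 0 (maxZ n N Z \<omega> - 2 * M * ln (2 * real N) / sqrt (real n))) ^ l)
          \<le> ennreal (psi K 2 (D \<omega>) + K^2) * ennreal (1 / (4*K))" .
    qed
    also have "\<dots> = (\<integral>\<^sup>+\<omega>. ennreal (psi K 2 (D \<omega>) + K^2) \<partial>(\<Pi>\<^sub>M i\<in>{1..n}. Sp i)) * ennreal (1 / (4*K))"
      by (rule nn_integral_multc[OF meas])
    also have "\<dots> \<le> ennreal (exp (alph n M K 2) * (2 * K^2)) * ennreal (1 / (4*K))"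
      by (rule mult_right_mono[OF mb]) simp
    also have "\<dots> = ennreal (exp (alph n M K 2) * (2 * K^2) * (1 / (4*K)))"
      by (rule ennreal_mult'[symmetric]) simp
    also have "exp (alph n M K 2) * (2 * K^2) * (1 / (4*K)) \<le> (sqrt 35 * real l * U)^l"
    proof -
      have a: "alph n M K 2 \<le> 1/4" using alph_1[OF n M] by (simp add: K_def U_def)
      have e4: "exp (1/4::real) \<le> 1.9"
      proof (rule power_le_imp_le_base[where n=3])
        have "exp (1/4::real) ^ Suc 3 = exp 1" by (simp flip: exp_of_nat_mult)
        also have "\<dots> \<le> 3" by (rule exp_le)
        also have "(3::real) \<le> 1.9 ^ Suc 3" by (simp add: power_numeral_reduce)
        finally show "exp (1/4::real) ^ Suc 3 \<le> 1.9 ^ Suc 3" .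
      qed simp
      have ea: "exp (alph n M K 2) \<le> 1.9" using a e4 by (meson exp_le_cancel_iff order_trans)
      have "exp (alph n M K 2) * (2 * K^2) * (1 / (4*K)) = exp (alph n M K 2) * 3 * U"
        using K by (simp add: K_def power2_eq_square field_simps)
      also have "\<dots> \<le> 1.9 * 3 * U" using ea U by (intro mult_right_mono) auto
      also have "\<dots> \<le> sqrt 35 * U"
      proof (intro mult_right_mono)
        show "1.9 * 3 \<le> sqrt (35::real)" by (rule real_le_rsqrt) (simp add: power2_eq_square)
      qed (use U in simp)
      also have "\<dots> = (sqrt 35 * real l * U)^l" using l1 by simp
      finally show ?thesis .
    qed
    hence "ennreal (exp (alph n M K 2) * (2 * K^2) * (1 / (4*K))) \<le> ennreal ((sqrt 35 * real l * U)^l)"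
      by (rule ennreal_leI)
    finally show ?thesis unfolding RHS .
  qed
qed

end
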